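(* Let $w\in\mathcal L_n$ have a valid step $q$ in $\mathcal L$. If for some $1\le i<j\le q$ one has $(w^{q\ast2})_{[i,i+n-1]}=(w^{q\ast 2})_{[j,j+n-1]}$, then $j-i$ is a valid step for $w$ in $\mathcal L$. Consequently, if $q$ is the minimal step for $w$, the words $(w^{q\ast 2})_{[i,i+n-1]}$, $1\le i\le q$, are pairwise distinct.
   Context: $\mathcal L$ is a language over a finite alphabet $\mathcal A$ (nonempty finite words, containing $\mathcal A$, closed under subwords, every word extendable on both sides), $\mathcal L_n$ its words of length $n$. For $n\ge 2$, $w\in\mathcal A^n$ and integer $1\le q\le n/2$ with $w_{[q+1,n]}=w_{[1,n-q]}$, $w^{q\ast r}$ is the word of length $n+(r-1)q$ with $(w^{q\ast r})_{[q(i-1)+1,q(i-1)+n]}=w$ for $1\le i\le r$; $q$ is a valid step for $w$ in $\mathcal L$ if moreover $w^{q\ast 2}\in\mathcal L$. The minimal step is the least valid step. *)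

theory Defs
  imports Main
begin

text \<open>Words are lists; positions are 1-based as in the paper.
  factor u a b is the subword u_[a,b] (positions a..b).\<close>

definition factor :: "'a list \<Rightarrow> nat \<Rightarrow> nat \<Rightarrow> 'a list" where
  "factor u a b = take (Suc b - a) (drop (a - 1) u)"

definition is_language :: "'a set \<Rightarrow> 'a list set \<Rightarrow> bool" where
  "is_language A L \<longleftrightarrow>
     finite A \<and> A \<noteq> {} \<and>
     (\<forall>w\<in>L. w \<noteq> [] \<and> set w \<subseteq> A) \<and>
     (\<forall>a\<in>A. [a] \<in> L) \<and>
     (\<forall>u v x. u @ x @ v \<in> L \<longrightarrow> x \<noteq> [] \<longrightarrow> x \<in> L) \<and>
     (\<forall>w\<in>L. \<exists>a\<in>A. \<exists>b\<in>A. a # w @ [b] \<in> L)"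

definition lang_n :: "'a list set \<Rightarrow> nat \<Rightarrow> 'a list set" where
  "lang_n L n = {w \<in> L. length w = n}"

text \<open>w^{q*r}: the word of length n+(r-1)q whose factors at positions
  q(i-1)+1 .. q(i-1)+n equal w, for 1 \<le> i \<le> r (under the overlap condition
  w_[q+1,n] = w_[1,n-q] this is the word below).\<close>

definition qpow :: "'a list \<Rightarrow> nat \<Rightarrow> nat \<Rightarrow> 'a list" where
  "qpow w q r = concat (replicate (r - 1) (take q w)) @ w"

definition valid_step :: "'a list set \<Rightarrow> 'a list \<Rightarrow> nat \<Rightarrow> bool" where
  "valid_step L w q \<longleftrightarrow>
     (let n = length w in
       2 \<le> n \<and> 1 \<le> q \<and> 2 * q \<le> n \<and>
       factor w (q + 1) n = factor w 1 (n - q) \<and>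
       qpow w q 2 \<in> L)"

definition minimal_step :: "'a list set \<Rightarrow> 'a list \<Rightarrow> nat \<Rightarrow> bool" where
  "minimal_step L w q \<longleftrightarrow> valid_step L w q \<and> (\<forall>p<q. \<not> valid_step L w p)"

end

theory Submission
  imports Defs
begin

lemma per_mod:
  fixes f :: "nat \<Rightarrow> 'b" and x :: nat
  assumes "\<And>k. k + q < len \<Longrightarrow> f k = f (k + q)" "q > 0"
  shows "x < len \<Longrightarrow> f x = f (x mod q)"
proof (induction x rule: less_induct)
  case (less x)
  show ?case
  proof (cases "x < q")
    case True then show ?thesis by simp
  next
    case False
    then have "x - q < x" "x - q < len" using assms(2) less.prems by auto
    then have "f (x - q) = f ((x - q) mod q)" using less.IH by blast
    moreover have "f (x - q) = f x" using assms(1)[of "x - q"] False less.prems by simp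
    moreover have "(x - q) mod q = x mod q" using False by (simp add: le_mod_geq)
    ultimately show ?thesis by simp
  qed
qed

lemma factor_alt: "1 \<le> i \<Longrightarrow> factor u i (i + n - 1) = take n (drop (i - 1) u)"
  unfolding factor_def by (simp add: Suc_diff_le)

lemma step_lemma:
  assumes L: "is_language A L"
    and wl: "length w = n"
    and v: "valid_step L w q"
    and ij: "1 \<le> i" "i < j" "j \<le> q"
    and eq: "factor (qpow w q 2) i (i + n - 1) = factor (qpow w q 2) j (j + n - 1)"
  shows "valid_step L w (j - i)"
proof -
  define W where "W = take q w @ w"
  define p where "p = j - i"
  have vq: "2 \<le> n" "1 \<le> q" "2 * q \<le> n" "factor w (q + 1) n = factor w 1 (n - q)"
    "W \<in> L" using v wl unfolding valid_step_def W_def qpow_def by (auto simp: numeral_2_eq_2)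
  have lenW: "length W = n + q" using vq wl by (simp add: W_def)
  have Wq: "\<And>s. s < n \<Longrightarrow> W ! (q + s) = w ! s" using vq wl
    by (simp add: W_def nth_append min_def)
  have fw: "take (n - q) (drop q w) = take (n - q) w"
    using vq(4) unfolding factor_def by (simp add: Suc_diff_le)
  have wper: "\<And>k. k < n - q \<Longrightarrow> w ! (k + q) = w ! k"
  proof -
    fix k assume k: "k < n - q"
    have "take (n - q) (drop q w) ! k = take (n - q) w ! k" using fw by simp
    then show "w ! (k + q) = w ! k" using k wl by (simp add: add.commute)
  qed
  have P1: "\<And>k. k + q < n + q \<Longrightarrow> W ! k = W ! (k + q)"
  proof -
    fix k assume k: "k + q < n + q"
    have r: "W ! (k + q) = w ! k" using Wq[of k] k by (simp add: add.commute)
    show "W ! k = W ! (k + q)"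
    proof (cases "k < q")
      case True then show ?thesis using r wl vq by (simp add: W_def nth_append min_def)
    next
      case False
      then have "W ! k = w ! (k - q)" using wl vq by (simp add: W_def nth_append min_def)
      also have "\<dots> = w ! (k - q + q)" using wper[of "k - q"] k False by simp
      finally show ?thesis using r False by simp
    qed
  qed
  have PM: "\<And>x y. x < n + q \<Longrightarrow> y < n + q \<Longrightarrow> x mod q = y mod q \<Longrightarrow> W ! x = W ! y"
  proof -
    fix x y assume "x < n + q" "y < n + q" "x mod q = y mod q"
    then show "W ! x = W ! y"
    proof -
      have q0: "q > 0" using vq(2) by simp
      have "W ! x = W ! (x mod q)" using per_mod[of q "n+q" "\<lambda>k. W ! k" x] P1 q0 \<open>x < n + q\<close> by blast
      moreover have "W ! y = W ! (y mod q)" using per_mod[of q "n+q" "\<lambda>k. W ! k" y] P1 q0 \<open>y < n + q\<close> by blast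
      ultimately show ?thesis using \<open>x mod q = y mod q\<close> by simp
    qed
  qed
  have eqW: "\<And>t. t < n \<Longrightarrow> W ! (i - 1 + t) = W ! (j - 1 + t)"
  proof -
    fix t assume t: "t < n"
    have "take n (drop (i - 1) W) = take n (drop (j - 1) W)"
    proof -
      have "qpow w q 2 = W" by (simp add: W_def qpow_def numeral_2_eq_2)
      then show ?thesis using eq ij factor_alt[of i W n] factor_alt[of j W n] by simp
    qed
    then have "take n (drop (i - 1) W) ! t = take n (drop (j - 1) W) ! t" by simp
    then show "W ! (i - 1 + t) = W ! (j - 1 + t)" using t lenW ij by simp
  qed
  have P2: "\<And>m. m + p < n + q \<Longrightarrow> W ! m = W ! (m + p)"
  proof -
    fix m assume m: "m + p < n + q"
    define a where "a = i - 1"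
    define t where "t = (m + q - a mod q) mod q"
    have tq: "t < q" using vq(2) by (simp add: t_def)
    have km: "(a + t) mod q = m mod q"
    proof -
      have "a mod q \<le> m + q" using vq(2) by (meson le_add2 less_imp_le_nat mod_less_divisor order.trans trans_le_add2 zero_less_one less_le_trans)
      have "(a + t) mod q = (a + (m + q - a mod q)) mod q" by (simp add: t_def mod_add_right_eq)
      also have "a + (m + q - a mod q) = (a - a mod q) + m + q"
        using \<open>a mod q \<le> m + q\<close> mod_less_eq_dividend[of a q] by linarith
      also have "((a - a mod q) + m + q) mod q = m mod q"
        by (simp add: minus_mod_eq_mult_div)
      finally show ?thesis .
    qed
    have km2: "(a + t + p) mod q = (m + p) mod q" using km by (metis mod_add_left_eq)
    have "W ! m = W ! (a + t)" using PM[of m "a + t"] km m tq ij vq a_def by (simp add: p_def)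
    also have "\<dots> = W ! (j - 1 + t)" using eqW[of t] tq vq a_def by simp
    also have "j - 1 + t = a + t + p" using ij by (simp add: a_def p_def)
    also have "W ! (a + t + p) = W ! (m + p)" using PM[of "a + t + p" "m + p"] km2 m tq ij vq
      by (simp add: a_def p_def)
    finally show "W ! m = W ! (m + p)" .
  qed
  have pp: "1 \<le> p" "p < q" using ij by (auto simp: p_def)
  have c1: "factor w (p + 1) n = factor w 1 (n - p)"
  proof -
    have "take (n - p) (drop p w) = take (n - p) w"
    proof (rule nth_equalityI)
      show "length (take (n - p) (drop p w)) = length (take (n - p) w)" using wl by simp
      fix t assume "t < length (take (n - p) (drop p w))"
      then have t: "t < n - p" using wl by simp
      have "w ! (p + t) = W ! (q + (p + t))" using Wq[of "p+t"] t by simp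
      also have "\<dots> = W ! (t + q + p)" by (simp add: algebra_simps)
      also have "\<dots> = W ! (t + q)" using P2[of "t + q"] t by simp
      also have "\<dots> = w ! t" using Wq[of t] t by (simp add: add.commute)
      finally show "take (n - p) (drop p w) ! t = take (n - p) w ! t" using t wl by simp
    qed
    then show ?thesis unfolding factor_def by (simp add: Suc_diff_le)
  qed
  have c2: "take p w @ w = take (n + p) (drop (q - p) W)"
  proof (rule nth_equalityI)
    show "length (take p w @ w) = length (take (n + p) (drop (q - p) W))"
      using wl lenW pp vq by simp
    fix t assume "t < length (take p w @ w)"
    then have t: "t < n + p" using wl pp vq by simp
    have R: "take (n + p) (drop (q - p) W) ! t = W ! (q - p + t)" using t lenW pp by simp
    show "(take p w @ w) ! t = take (n + p) (drop (q - p) W) ! t"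
    proof (cases "t < p")
      case True
      have "(take p w @ w) ! t = w ! t" using True wl pp vq by (simp add: nth_append)
      also have "\<dots> = W ! (q + t)" using Wq[of t] True pp vq by simp
      also have "q + t = (q - p + t) + p" using pp by simp
      also have "W ! \<dots> = W ! (q - p + t)" using P2[of "q - p + t"] True pp vq by simp
      finally show ?thesis using R by simp
    next
      case False
      have "(take p w @ w) ! t = w ! (t - p)" using False wl pp vq by (simp add: nth_append)
      also have "\<dots> = W ! (q + (t - p))" using Wq[of "t-p"] t False by simp
      also have "q + (t - p) = q - p + t" using False pp by simp
      finally show ?thesis using R by simp
    qed
  qed
  have c3: "take p w @ w \<in> L"
  proof -
    have "W = take (q - p) W @ take (n + p) (drop (q - p) W) @ drop (n + p) (drop (q - p) W)"
      by (simp only: append_take_drop_id)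
    moreover have "take p w @ w \<noteq> []" using vq wl by auto
    ultimately show ?thesis using L vq(5) c2 unfolding is_language_def by metis
  qed
  show ?thesis unfolding valid_step_def Let_def p_def[symmetric]
    using vq pp wl c1 c3 by (simp add: qpow_def)
qed

theorem mainTheorem12:
  fixes A :: "'a set" and L :: "'a list set" and w :: "'a list" and n q :: nat
  assumes "is_language A L"
    and "w \<in> lang_n L n"
    and "valid_step L w q"
  shows "(\<forall>i j. 1 \<le> i \<and> i < j \<and> j \<le> q \<and>
            factor (qpow w q 2) i (i + n - 1) = factor (qpow w q 2) j (j + n - 1)
            \<longrightarrow> valid_step L w (j - i))
       \<and> (minimal_step L w q \<longrightarrow>
            (\<forall>i j. 1 \<le> i \<and> i \<le> q \<and> 1 \<le> j \<and> j \<le> q \<and> i \<noteq> j \<longrightarrow>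
               factor (qpow w q 2) i (i + n - 1) \<noteq> factor (qpow w q 2) j (j + n - 1)))"
proof -
  have wl: "length w = n" using assms(2) by (simp add: lang_n_def)
  have A: "\<forall>i j. 1 \<le> i \<and> i < j \<and> j \<le> q \<and>
            factor (qpow w q 2) i (i + n - 1) = factor (qpow w q 2) j (j + n - 1)
            \<longrightarrow> valid_step L w (j - i)"
    using step_lemma[OF assms(1) wl assms(3)] by blast
  show ?thesis
  proof (intro conjI A impI allI)
    fix i j assume ms: "minimal_step L w q"
      and h: "1 \<le> i \<and> i \<le> q \<and> 1 \<le> j \<and> j \<le> q \<and> i \<noteq> j"
    show "factor (qpow w q 2) i (i + n - 1) \<noteq> factor (qpow w q 2) j (j + n - 1)"
    proof
      assume e: "factor (qpow w q 2) i (i + n - 1) = factor (qpow w q 2) j (j + n - 1)"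
      show False
      proof (cases "i < j")
        case True
        then have "valid_step L w (j - i)" using A e h by blast
        moreover have "j - i < q" using h True by arith
        ultimately show False using ms unfolding minimal_step_def by blast
      next
        case False
        then have "j < i" using h by simp
        then have "valid_step L w (i - j)" using A e h by metis
        moreover have "i - j < q" using h \<open>j < i\<close> by arith
        ultimately show False using ms unfolding minimal_step_def by blast
      qed
    qed
  qed
qed

end
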